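(* Let $a<b$, let $g:[a,b]\to[0,\infty)$ be increasing and left-continuous, and let $f\in BV([a,b])\cap\mathcal L^1_g([a,b))$. Assume $g^C$ is $p$-$H$-Hölder on $[a,b]$, i.e. $|g^C(x)-g^C(y)|\le H|x-y|^p$ for all $x,y\in[a,b]$, with $H>0$, $p\in(0,1]$. Then $$\Big| f(a)(g^C(b)-g^C(a))+\sum_{s\in[a,b)} f(s)\Delta^+g(s)-\int_{[a,b)} f\,\mathrm d\mu_g\Big|\le H(b-a)^p\,\mathrm{Var}_a^b f$$ and $$\Big| \tfrac{f(a)+f(b)}{2}(g^C(b)-g^C(a))+\sum_{s\in[a,b)} f(s)\Delta^+g(s)-\int_{[a,b)} f\,\mathrm d\mu_g\Big|\le H\Big(\tfrac{b-a}{2}\Big)^p\mathrm{Var}_a^b f.$$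
   Context: For an increasing left-continuous $g:[a,b]\to\mathbb R$, $\mu_g$ is the Lebesgue–Stieltjes measure on $[a,b)$ with $\mu_g([c,d))=g(d)-g(c)$, and $\mathcal L^1_g([a,b))$ the space of $\mu_g$-integrable functions. $\Delta^+\varphi(t)=\varphi(t^+)-\varphi(t)$. The jump part of $g$ is $g^B(t)=\sum_{s\in[a,t)}\Delta^+g(s)$ and its continuous part is $g^C=g-g^B$. $\mathrm{Var}_a^b f$ is the total variation of $f$ on $[a,b]$. *)

theory Defs
  imports "HOL-Analysis.Analysis"
begin

definition jump_plus :: "(real \<Rightarrow> real) \<Rightarrow> real \<Rightarrow> real" where
  "jump_plus g t = Lim (at_right t) g - g t"

definition jump_part :: "real \<Rightarrow> (real \<Rightarrow> real) \<Rightarrow> real \<Rightarrow> real" where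
  "jump_part a g t = infsum (jump_plus g) {a..<t}"

definition cont_part :: "real \<Rightarrow> (real \<Rightarrow> real) \<Rightarrow> real \<Rightarrow> real" where
  "cont_part a g t = g t - jump_part a g t"

definition LS_measure :: "real \<Rightarrow> real \<Rightarrow> (real \<Rightarrow> real) \<Rightarrow> real measure" where
  "LS_measure a b g = (THE M. sets M = sets borel \<and>
      (\<forall>c d. a \<le> c \<and> c \<le> d \<and> d \<le> b \<longrightarrow> emeasure M {c..<d} = ennreal (g d - g c)) \<and>
      emeasure M (- {a..<b}) = 0)"

definition variation_sums :: "real \<Rightarrow> real \<Rightarrow> (real \<Rightarrow> real) \<Rightarrow> real set" where
  "variation_sums a b f = {(\<Sum>i<n. \<bar>f (x (Suc i)) - f (x i)\<bar>) | n x.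
      x 0 = a \<and> x n = b \<and> (\<forall>i<n. x i \<le> x (Suc i))}"

definition bounded_variation :: "real \<Rightarrow> real \<Rightarrow> (real \<Rightarrow> real) \<Rightarrow> bool" where
  "bounded_variation a b f = bdd_above (variation_sums a b f)"

definition total_variation :: "real \<Rightarrow> real \<Rightarrow> (real \<Rightarrow> real) \<Rightarrow> real" where
  "total_variation a b f = Sup (variation_sums a b f)"

end

theory Submission imports Defs begin

lemma LS_exists:
  fixes a b :: real and g :: "real \<Rightarrow> real"
  assumes ab: "a \<le> b" and mono: "mono_on {a..b} g"
    and lc: "\<forall>t\<in>{a<..b}. (g \<longlongrightarrow> g t) (at_left t)"
  shows "\<exists>M. sets M = sets borel \<and>
      (\<forall>c d. a \<le> c \<and> c \<le> d \<and> d \<le> b \<longrightarrow> emeasure M {c..<d} = ennreal (g d - g c)) \<and>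
      emeasure M (- {a..<b}) = 0"
proof -
  define G where "G x = g (max a (min b x))" for x
  define F where "F y = - G (- y)" for y
  have Gmono: "G x \<le> G y" if "x \<le> y" for x y
    unfolding G_def using ab that by (intro mono_onD[OF mono]) auto
  have Fmono: "F x \<le> F y" if "x \<le> y" for x y
    unfolding F_def using Gmono[of "-y" "-x"] that by auto
  have Gleft: "(G \<longlongrightarrow> G x) (at_left x)" for x
  proof (cases "x \<le> a")
    case True
    have "eventually (\<lambda>y. y < x) (at_left x)"
      by (simp add: eventually_at_filter)
    then have "eventually (\<lambda>y. G y = G x) (at_left x)"
      by eventually_elim (use True ab in \<open>auto simp: G_def\<close>)
    then show ?thesis by (rule tendsto_eventually)
  next
    case False
    show ?thesis
    proof (cases "x \<le> b")
      case True
      with False have x: "x \<in> {a<..b}" by auto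
      have "eventually (\<lambda>y. y \<in> {a<..<x}) (at_left x)"
        using False by (intro eventually_at_left_real) auto
      then have "eventually (\<lambda>y. g y = G y) (at_left x)"
        by eventually_elim (use True in \<open>auto simp: G_def\<close>)
      moreover have "G x = g x" using x by (auto simp: G_def)
      ultimately show ?thesis using lc x
        by (auto intro: Lim_transform_eventually)
    next
      case False
      have "eventually (\<lambda>y. y \<in> {b<..<x}) (at_left x)"
        using False by (intro eventually_at_left_real) auto
      then have "eventually (\<lambda>y. G y = G x) (at_left x)"
        by eventually_elim (use False ab in \<open>auto simp: G_def\<close>)
      then show ?thesis by (rule tendsto_eventually)
    qed
  qed
  have Fright: "continuous (at_right y) F" for y
  proof -
    have "((\<lambda>y. G (- y)) \<longlongrightarrow> G (-y)) (at_right y)"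
      using Gleft[of "-y"] by (simp add: filterlim_at_left_to_right o_def)
    then show ?thesis unfolding continuous_within F_def
      by (auto intro: tendsto_minus)
  qed
  define N where "N = interval_measure F"
  define M0 where "M0 = distr N borel uminus"
  define M where "M = density M0 (indicator {a..<b})"
  have sM0: "sets M0 = sets borel" by (simp add: M0_def)
  have M0I: "emeasure M0 {c..<d} = ennreal (G d - G c)" if "c \<le> d" for c d
  proof -
    have "emeasure M0 {c..<d} = emeasure N (uminus -` {c..<d})"
      unfolding M0_def N_def by (subst emeasure_distr) auto
    also have "uminus -` {c..<d} = {-d<..-c}" by auto
    also have "emeasure N {-d<..-c} = ennreal (F (-c) - F (-d))"
      unfolding N_def using that Fmono Fright by (intro emeasure_interval_measure_Ioc) auto
    finally show ?thesis by (simp add: F_def)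
  qed
  have sM: "sets M = sets borel" by (simp add: M_def sM0)
  have MI: "emeasure M A = emeasure M0 ({a..<b} \<inter> A)" if "A \<in> sets borel" for A
    unfolding M_def using that sM0 by (intro emeasure_restricted) auto
  show ?thesis
  proof (intro exI[of _ M] conjI allI impI)
    show "sets M = sets borel" by fact
    fix c d assume cd: "a \<le> c \<and> c \<le> d \<and> d \<le> b"
    then have "{a..<b} \<inter> {c..<d} = {c..<d}" by auto
    then show "emeasure M {c..<d} = ennreal (g d - g c)"
      using MI[of "{c..<d}"] M0I[of c d] cd by (auto simp: G_def)
  next
    show "emeasure M (- {a..<b}) = 0"
      using MI[of "- {a..<b}"] by auto
  qed
qed

definition LSP :: "real \<Rightarrow> real \<Rightarrow> (real \<Rightarrow> real) \<Rightarrow> real measure \<Rightarrow> bool" where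
  "LSP a b g M \<longleftrightarrow> sets M = sets borel \<and>
      (\<forall>c d. a \<le> c \<and> c \<le> d \<and> d \<le> b \<longrightarrow> emeasure M {c..<d} = ennreal (g d - g c)) \<and>
      emeasure M (- {a..<b}) = 0"

lemma LSP_restrict:
  assumes "LSP a b g M" "X \<in> sets borel"
  shows "emeasure M X = emeasure M (X \<inter> {a..<b})"
proof -
  have s: "sets M = sets borel" using assms by (simp add: LSP_def)
  have m: "- {a..<b} \<in> sets M" unfolding s by simp
  have z: "emeasure M (- {a..<b}) = 0" using assms(1) by (simp add: LSP_def)
  have "- {a..<b} \<in> null_sets M" using m z by (intro null_setsI)
  moreover have "X - {a..<b} \<in> sets M" using assms(2) unfolding s by simp
  ultimately have n: "X - {a..<b} \<in> null_sets M"
    by (rule null_sets_subset) auto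
  have "X = (X \<inter> {a..<b}) \<union> (X - {a..<b})" by auto
  then have "emeasure M X = emeasure M ((X \<inter> {a..<b}) \<union> (X - {a..<b}))" by simp
  also have "\<dots> = emeasure M (X \<inter> {a..<b})"
    using assms(2) s n by (intro emeasure_Un_null_set) auto
  finally show ?thesis .
qed

lemma LSP_Ico:
  assumes "LSP a b g M"
  shows "emeasure M {c..<d} = (if max a c \<le> min b d then ennreal (g (min b d) - g (max a c)) else 0)"
proof -
  have "emeasure M {c..<d} = emeasure M ({c..<d} \<inter> {a..<b})"
    using assms by (intro LSP_restrict) auto
  also have "{c..<d} \<inter> {a..<b} = {max a c..<min b d}" by auto
  finally have e: "emeasure M {c..<d} = emeasure M {max a c..<min b d}" .
  show ?thesis
  proof (cases "max a c \<le> min b d")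
    case True
    then show ?thesis using e assms unfolding LSP_def
      by (metis max.cobounded1 min.cobounded1)
  next
    case False
    then have emp: "{max a c..<min b d} = {}" by auto
    show ?thesis by (subst if_not_P[OF False]) (simp add: e emp)
  qed
qed

lemma LSP_unique:
  assumes "LSP a b g M1" "LSP a b g M2"
  shows "M1 = M2"
proof (rule measure_eqI_generator_eq[where E="range (\<lambda>(c,d). {c..<d::real})" and \<Omega>=UNIV
      and A="\<lambda>i. {- real i..<real i}"])
  show "Int_stable (range (\<lambda>(c, d). {c..<d::real}))"
  proof (rule Int_stableI)
    fix X Y assume "X \<in> range (\<lambda>(c, d). {c..<d::real})" "Y \<in> range (\<lambda>(c, d). {c..<d::real})"
    then obtain c d c' d' where XY: "X = {c..<d}" "Y = {c'..<d'}" by auto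
    have "{c..<d} \<inter> {c'..<d'} = {max c c'..<min d d'}" by auto
    then have "X \<inter> Y = (\<lambda>(c, d). {c..<d::real}) (max c c', min d d')" using XY by simp
    then show "X \<inter> Y \<in> range (\<lambda>(c, d). {c..<d::real})" by blast
  qed
  show "range (\<lambda>(c, d). {c..<d::real}) \<subseteq> Pow UNIV" by auto
  show "sets M1 = sigma_sets UNIV (range (\<lambda>(c, d). {c..<d}))"
    using assms(1) by (simp add: LSP_def borel_eq_atLeastLessThan)
  show "sets M2 = sigma_sets UNIV (range (\<lambda>(c, d). {c..<d}))"
    using assms(2) by (simp add: LSP_def borel_eq_atLeastLessThan)
  show "range (\<lambda>i. {- real i..<real i}) \<subseteq> range (\<lambda>(c, d). {c..<d})" by auto
  show "(\<Union>i. {- real i..<real i}) = UNIV"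
  proof safe
    fix x :: real
    obtain n :: nat where "\<bar>x\<bar> < real n" using reals_Archimedean2 by blast
    then have "x \<in> {- real n..<real n}" by auto
    then show "x \<in> (\<Union>i. {- real i..<real i})" by blast
  qed auto
  show "emeasure M1 {- real i..<real i} \<noteq> \<infinity>" for i
    using LSP_Ico[OF assms(1)] by simp
  fix X assume "X \<in> range (\<lambda>(c, d). {c..<d::real})"
  then obtain c d where "X = {c..<d}" by auto
  then show "emeasure M1 X = emeasure M2 X"
    using LSP_Ico[OF assms(1)] LSP_Ico[OF assms(2)] by simp
qed

lemma LS_measure_LSP:
  assumes ab: "a \<le> b" and mono: "mono_on {a..b} g"
    and lc: "\<forall>t\<in>{a<..b}. (g \<longlongrightarrow> g t) (at_left t)"
  shows "LSP a b g (LS_measure a b g)"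
proof -
  obtain M where M: "LSP a b g M" using LS_exists[OF assms] unfolding LSP_def by blast
  have "\<exists>!M. LSP a b g M" using M LSP_unique by blast
  then have "LSP a b g (THE M. LSP a b g M)" by (rule theI')
  then show ?thesis unfolding LS_measure_def LSP_def by simp
qed


lemma LSP_basic:
  assumes L: "LSP a b g M" and ab: "a \<le> b" and mono: "mono_on {a..b} g"
  shows "space M = UNIV" "finite_measure M" "measure M UNIV = g b - g a"
    "\<And>c d. a \<le> c \<Longrightarrow> c \<le> d \<Longrightarrow> d \<le> b \<Longrightarrow> measure M {c..<d} = g d - g c"
    "sets M = sets borel"
proof -
  have s: "sets M = sets borel" using L by (simp add: LSP_def)
  show sp: "space M = UNIV" using sets_eq_imp_space_eq[OF s] by simp
  show "sets M = sets borel" by fact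
  have cd: "measure M {c..<d} = g d - g c" if "a \<le> c" "c \<le> d" "d \<le> b" for c d
  proof -
    have "g c \<le> g d" using that ab by (intro mono_onD[OF mono]) auto
    moreover have "emeasure M {c..<d} = ennreal (g d - g c)" using L that by (simp add: LSP_def)
    ultimately show ?thesis by (simp add: measure_def)
  qed
  then show "\<And>c d. a \<le> c \<Longrightarrow> c \<le> d \<Longrightarrow> d \<le> b \<Longrightarrow> measure M {c..<d} = g d - g c" .
  have U: "emeasure M UNIV = emeasure M {a..<b}"
    using LSP_restrict[OF L, of UNIV] by simp
  also have "\<dots> = ennreal (g b - g a)" using L ab by (simp add: LSP_def)
  finally have U': "emeasure M UNIV = ennreal (g b - g a)" .
  show "finite_measure M" using U' sp by (intro finite_measureI) simp
  have "g a \<le> g b" using ab by (intro mono_onD[OF mono]) auto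
  then show "measure M UNIV = g b - g a" using U' by (simp add: measure_def)
qed


lemma LSP_atom:
  assumes L: "LSP a b g M" and ab: "a \<le> b" and mono: "mono_on {a..b} g"
    and sa: "a \<le> s" and sb: "s < b"
  shows "jump_plus g s = measure M {s}"
proof -
  note B = LSP_basic[OF L ab mono]
  interpret finite_measure M by (rule B(2))
  have lim: "(g \<longlongrightarrow> g s + measure M {s}) (at_right s)"
  proof (rule tendsto_at_right_sequentially[OF sb])
    fix S :: "nat \<Rightarrow> real"
    assume S: "\<And>n. s < S n" "\<And>n. S n < b" "decseq S" "S \<longlonglongrightarrow> s"
    have eq: "g (S n) = g s + measure M {s..<S n}" for n
      using B(4)[of s "S n"] S(1)[of n] S(2)[of n] sa by simp
    have dec: "decseq (\<lambda>n. {s..<S n})"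
      unfolding decseq_def
    proof (intro allI impI)
      fix m n :: nat assume "m \<le> n"
      then have "S n \<le> S m" using S(3) by (simp add: decseq_def)
      then show "{s..<S n} \<subseteq> {s..<S m}" by auto
    qed
    have int: "(\<Inter>n. {s..<S n}) = {s}"
    proof safe
      fix x assume x: "x \<in> (\<Inter>n. {s..<S n})"
      then have "\<forall>n\<ge>0. x \<le> S n" by (simp add: less_imp_le)
      then have "x \<le> s" by (intro LIMSEQ_le_const[OF S(4)]) blast
      moreover have "s \<le> x" using x by auto
      ultimately show "x = s" by simp
    next
      show "s \<in> {s..<S n}" for n using S(1)[of n] by simp
    qed

    have "(\<lambda>n. measure M {s..<S n}) \<longlonglongrightarrow> measure M (\<Inter>n. {s..<S n})"
    proof (rule finite_Lim_measure_decseq)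
      show "range (\<lambda>n. {s..<S n}) \<subseteq> sets M" unfolding B(5) by auto
    qed (rule dec)
    then have "(\<lambda>n. g s + measure M {s..<S n}) \<longlonglongrightarrow> g s + measure M {s}"
      unfolding int by (intro tendsto_add tendsto_const)
    then show "(\<lambda>n. g (S n)) \<longlonglongrightarrow> g s + measure M {s}"
      unfolding eq .
  qed
  have "Lim (at_right s) g = g s + measure M {s}"
    by (rule tendsto_Lim[OF trivial_limit_at_right_real lim])
  then show ?thesis unfolding jump_plus_def by simp
qed

lemma LSP_finite_sum:
  assumes L: "LSP a b g M" and ab: "a \<le> b" and mono: "mono_on {a..b} g"
    and F: "finite F" "F \<subseteq> {a..<b}"
  shows "measure M F = (\<Sum>s\<in>F. jump_plus g s)"
    "(\<Sum>s\<in>F. jump_plus g s) \<le> g b - g a"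
proof -
  note B = LSP_basic[OF L ab mono]
  interpret finite_measure M by (rule B(2))
  have "measure M F = (\<Sum>s\<in>F. measure M {s})"
    using F(1) by (rule measure_eq_sum_singleton) (auto simp: B(5))
  also have "\<dots> = (\<Sum>s\<in>F. jump_plus g s)"
  proof (rule sum.cong[OF refl])
    fix x assume "x \<in> F"
    then show "measure M {x} = jump_plus g x" using F LSP_atom[OF L ab mono, of x] by auto
  qed
  finally show 1: "measure M F = (\<Sum>s\<in>F. jump_plus g s)" .
  have "measure M F \<le> measure M {a..<b}"
    using F(2) by (rule finite_measure_mono) (simp add: B(5))
  then show "(\<Sum>s\<in>F. jump_plus g s) \<le> g b - g a" using 1 B(4)[of a b] ab by simp
qed



lemma LSP_finite_bound:
  assumes L: "LSP a b g M" and ab: "a \<le> b" and mono: "mono_on {a..b} g"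
    and hint: "integrable M h" and bnd: "\<And>x. x \<in> {a..<b} \<Longrightarrow> \<bar>h x\<bar> \<le> K"
    and F: "finite F" "F \<subseteq> {a..<b}"
  shows "\<bar>integral\<^sup>L M h - (\<Sum>s\<in>F. h s * jump_plus g s)\<bar>
           \<le> K * (g b - g a - (\<Sum>s\<in>F. jump_plus g s))"
proof -
  note B = LSP_basic[OF L ab mono]
  interpret finite_measure M by (rule B(2))
  have fin: "emeasure M A < \<infinity>" for A by (simp add: less_top[symmetric])
  have ind: "integrable M (\<lambda>x. c * indicator A x :: real)" if "A \<in> sets borel" for c A
  proof -
    have "integrable M (indicator A :: real \<Rightarrow> real)"
      using that fin by (intro integrable_real_indicator) (auto simp: B(5))
    then show ?thesis by (rule integrable_mult_right)
  qed
  have Fb: "F \<in> sets borel" by (intro borel_closed finite_imp_closed F(1))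
  have Db: "{a..<b} - F \<in> sets borel" using Fb by (intro sets.Diff) auto
  define q where "q x = (\<Sum>s\<in>F. h s * indicator {s} x)" for x
  define r where "r x = h x - q x" for x
  have qint: "integrable M q" unfolding q_def
    by (rule Bochner_Integration.integrable_sum) (rule ind, simp)
  have rint: "integrable M r" unfolding r_def using hint qint by (rule Bochner_Integration.integrable_diff)
  have qI: "integral\<^sup>L M q = (\<Sum>s\<in>F. h s * jump_plus g s)"
  proof -
    have "integral\<^sup>L M q = (\<Sum>s\<in>F. integral\<^sup>L M (\<lambda>x. h s * indicator {s} x))"
      unfolding q_def
      by (rule Bochner_Integration.integral_sum)
         (rule ind, simp)
    also have "\<dots> = (\<Sum>s\<in>F. h s * measure M {s})"
      by (simp add: B(1))
    also have "\<dots> = (\<Sum>s\<in>F. h s * jump_plus g s)"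
    proof (rule sum.cong[OF refl])
      fix x assume "x \<in> F"
      then show "h x * measure M {x} = h x * jump_plus g x"
        using F LSP_atom[OF L ab mono, of x] by auto
    qed
    finally show ?thesis .
  qed
  have hI: "integral\<^sup>L M h = integral\<^sup>L M q + integral\<^sup>L M r"
    using Bochner_Integration.integral_diff[OF hint qint] unfolding r_def by simp
  have qx: "q x = (if x \<in> F then h x else 0)" for x
  proof (cases "x \<in> F")
    case True
    have "q x = (\<Sum>s\<in>F. if s = x then h s else 0)"
      unfolding q_def by (intro sum.cong refl) (auto simp: indicator_def)
    also have "\<dots> = h x" using True F(1) by (simp add: sum.delta')
    finally show ?thesis using True by simp
  next
    case False
    have "q x = (\<Sum>s\<in>F. 0)"
      unfolding q_def using False by (intro sum.cong refl) (auto simp: indicator_def)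
    then show ?thesis using False by simp
  qed
  have null: "- {a..<b} \<in> null_sets M"
    using L by (intro null_setsI) (auto simp: LSP_def B(5))
  have AE: "AE x in M. \<bar>r x\<bar> \<le> K * indicator ({a..<b} - F) x"
  proof (rule AE_I'[OF null])
    show "{x \<in> space M. \<not> \<bar>r x\<bar> \<le> K * indicator ({a..<b} - F) x} \<subseteq> - {a..<b}"
    proof
      fix x assume x: "x \<in> {x \<in> space M. \<not> \<bar>r x\<bar> \<le> K * indicator ({a..<b} - F) x}"
      show "x \<in> - {a..<b}"
      proof
        assume xa: "x \<in> {a..<b}"
        show False
        proof (cases "x \<in> F")
          case True
          then have "r x = 0" unfolding r_def qx by simp
          moreover have "0 \<le> K" using bnd[OF xa] by simp
          ultimately show False using x by (auto simp: indicator_def)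
        next
          case False
          then have "r x = h x" unfolding r_def qx by simp
          then show False using x xa False bnd[OF xa] by (auto simp: indicator_def)
        qed
      qed
    qed
  qed
  have "\<bar>integral\<^sup>L M r\<bar> \<le> integral\<^sup>L M (\<lambda>x. \<bar>r x\<bar>)"
    using integral_norm_bound[of M r] by simp
  also have "\<dots> \<le> integral\<^sup>L M (\<lambda>x. K * indicator ({a..<b} - F) x)"
    by (rule integral_mono_AE[OF integrable_abs[OF rint] _ AE])
       (rule ind, rule Db)
  also have "\<dots> = K * measure M ({a..<b} - F)"
    by (simp add: B(1))
  also have "measure M ({a..<b} - F) = measure M {a..<b} - measure M F"
    using F(2) by (intro finite_measure_Diff) (auto simp: B(5) Fb)
  also have "\<dots> = g b - g a - (\<Sum>s\<in>F. jump_plus g s)"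
    using B(4)[of a b] ab LSP_finite_sum(1)[OF L ab mono F] by simp
  finally have rb: "\<bar>integral\<^sup>L M r\<bar> \<le> K * (g b - g a - (\<Sum>s\<in>F. jump_plus g s))" .
  show ?thesis using rb hI qI by simp
qed


lemma limit_bound:
  fixes h j :: "real \<Rightarrow> real"
  assumes s1: "(\<lambda>s. h s * j s) summable_on A" and s2: "j summable_on A"
    and fb: "\<And>F. finite F \<Longrightarrow> F \<subseteq> A \<Longrightarrow>
      \<bar>I - (\<Sum>s\<in>F. h s * j s)\<bar> \<le> K * (C - (\<Sum>s\<in>F. j s))"
  shows "\<bar>I - infsum (\<lambda>s. h s * j s) A\<bar> \<le> K * (C - infsum j A)"
proof -
  have t1: "(sum (\<lambda>s. h s * j s) \<longlongrightarrow> infsum (\<lambda>s. h s * j s) A) (finite_subsets_at_top A)"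
    using has_sum_infsum[OF s1] unfolding has_sum_def .
  have t2: "(sum j \<longlongrightarrow> infsum j A) (finite_subsets_at_top A)"
    using has_sum_infsum[OF s2] unfolding has_sum_def .
  have l1: "((\<lambda>F. \<bar>I - sum (\<lambda>s. h s * j s) F\<bar>) \<longlongrightarrow> \<bar>I - infsum (\<lambda>s. h s * j s) A\<bar>)
      (finite_subsets_at_top A)"
    by (intro tendsto_intros t1)
  have l2: "((\<lambda>F. K * (C - sum j F)) \<longlongrightarrow> K * (C - infsum j A)) (finite_subsets_at_top A)"
    by (intro tendsto_intros t2)
  show ?thesis
    by (rule tendsto_le[OF finite_subsets_at_top_neq_bot l2 l1])
       (rule eventually_finite_subsets_at_top_weakI, rule fb)
qed

lemma bounded_summable:
  fixes u j :: "real \<Rightarrow> real"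
  assumes j: "j summable_on A" and jn: "\<And>s. s \<in> A \<Longrightarrow> 0 \<le> j s"
    and ub: "\<And>s. s \<in> A \<Longrightarrow> \<bar>u s\<bar> \<le> D"
  shows "(\<lambda>s. u s * j s) summable_on A"
proof (rule abs_summable_summable)
  have "(\<lambda>s. D * j s) summable_on A" by (rule summable_on_cmult_right[OF j])
  moreover have "D * j s = norm (D * j s)" if "s \<in> A" for s
  proof -
    have "0 \<le> D" using ub[OF that] by simp
    then show ?thesis using jn[OF that] by simp
  qed
  ultimately have "(\<lambda>s. norm (D * j s)) summable_on A"
    using summable_on_cong by metis
  then show "(\<lambda>s. norm (u s * j s)) summable_on A"
  proof (rule Infinite_Sum.abs_summable_on_comparison_test)
    fix s assume "s \<in> A"
    then have "\<bar>u s\<bar> \<le> \<bar>D\<bar>" using ub[of s] by linarith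
    then show "norm (u s * j s) \<le> norm (D * j s)"
      by (auto simp: abs_mult intro!: mult_right_mono)
  qed
qed

lemma var_bound:
  assumes bv: "bounded_variation a b f" and t: "a \<le> t" "t \<le> b"
  shows "\<bar>f t - f a\<bar> + \<bar>f b - f t\<bar> \<le> total_variation a b f"
proof -
  define x where "x i = (if i = 0 then a else if i = 1 then t else b)" for i :: nat
  have sum: "(\<Sum>i<2. \<bar>f (x (Suc i)) - f (x i)\<bar>) = \<bar>f t - f a\<bar> + \<bar>f b - f t\<bar>"
    by (simp add: x_def numeral_2_eq_2)
  have "x 0 = a \<and> x 2 = b \<and> (\<forall>i<2. x i \<le> x (Suc i))"
    using t by (auto simp: x_def less_2_cases_iff)
  then have "(\<Sum>i<2. \<bar>f (x (Suc i)) - f (x i)\<bar>) \<in> variation_sums a b f"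
    unfolding variation_sums_def by blast
  then have "(\<Sum>i<2. \<bar>f (x (Suc i)) - f (x i)\<bar>) \<le> total_variation a b f"
    unfolding total_variation_def using bv unfolding bounded_variation_def
    by (intro cSup_upper)
  then show ?thesis using sum by simp
qed


lemma core:
  assumes L: "LSP a b g M" and ab: "a \<le> b" and mono: "mono_on {a..b} g"
    and fint: "integrable M f"
    and fb: "\<And>t. t \<in> {a..<b} \<Longrightarrow> \<bar>f t\<bar> \<le> D"
    and cb: "\<And>t. t \<in> {a..<b} \<Longrightarrow> \<bar>f t - c\<bar> \<le> K"
  shows "\<bar>c * (cont_part a g b - cont_part a g a) + infsum (\<lambda>s. f s * jump_plus g s) {a..<b}
           - integral\<^sup>L M f\<bar> \<le> K * (cont_part a g b - cont_part a g a)"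
proof -
  note B = LSP_basic[OF L ab mono]
  interpret finite_measure M by (rule B(2))
  define A where "A = {a..<b}"
  define J where "J = jump_plus g"
  have jn: "0 \<le> J s" if "s \<in> A" for s
    using LSP_atom[OF L ab mono, of s] that by (simp add: A_def J_def)
  have Js: "J summable_on A"
  proof (rule nonneg_bdd_above_summable_on)
    show "0 \<le> J x" if "x \<in> A" for x using jn that .
    show "bdd_above (sum J ` {F. F \<subseteq> A \<and> finite F})"
      by (rule bdd_aboveI2[where M="g b - g a"])
         (use LSP_finite_sum(2)[OF L ab mono] in \<open>auto simp: A_def J_def\<close>)
  qed
  define h where "h x = f x - c" for x
  have hint: "integrable M h" unfolding h_def
    by (rule Bochner_Integration.integrable_diff[OF fint]) simp
  have s1: "(\<lambda>s. h s * J s) summable_on A"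
    by (rule bounded_summable[OF Js jn]) (use cb in \<open>auto simp: h_def A_def\<close>)
  have sf: "(\<lambda>s. f s * J s) summable_on A"
    by (rule bounded_summable[OF Js jn]) (use fb in \<open>auto simp: A_def\<close>)
  have lim: "\<bar>integral\<^sup>L M h - infsum (\<lambda>s. h s * J s) A\<bar> \<le> K * (g b - g a - infsum J A)"
  proof (rule limit_bound[OF s1 Js])
    fix F assume "finite F" "F \<subseteq> A"
    then show "\<bar>integral\<^sup>L M h - (\<Sum>s\<in>F. h s * J s)\<bar> \<le> K * (g b - g a - (\<Sum>s\<in>F. J s))"
      unfolding J_def A_def
      by (intro LSP_finite_bound[OF L ab mono hint]) (auto simp: h_def intro: cb)
  qed
  have fJ: "infsum (\<lambda>s. f s * J s) A = infsum (\<lambda>s. h s * J s) A + c * infsum J A"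
  proof -
    have "(\<lambda>s. f s * J s) = (\<lambda>s. h s * J s + c * J s)" by (auto simp: h_def algebra_simps)
    then have "infsum (\<lambda>s. f s * J s) A = infsum (\<lambda>s. h s * J s + c * J s) A" by simp
    also have "\<dots> = infsum (\<lambda>s. h s * J s) A + infsum (\<lambda>s. c * J s) A"
      by (rule infsum_add[OF s1 summable_on_cmult_right[OF Js]])
    also have "infsum (\<lambda>s. c * J s) A = c * infsum J A" by (rule infsum_cmult_right')
    finally show ?thesis .
  qed
  have fI: "integral\<^sup>L M f = integral\<^sup>L M h + c * (g b - g a)"
  proof -
    have "integral\<^sup>L M h = integral\<^sup>L M f - integral\<^sup>L M (\<lambda>x. c)"
      unfolding h_def by (rule Bochner_Integration.integral_diff[OF fint]) simp
    then show ?thesis using B(1) B(3) by simp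
  qed
  have gC: "cont_part a g b - cont_part a g a = g b - g a - infsum J A"
    by (simp add: cont_part_def jump_part_def A_def J_def)
  show ?thesis
    unfolding gC unfolding A_def[symmetric] J_def[symmetric] fJ fI
    using lim by (simp add: algebra_simps abs_minus_commute)
qed


theorem mainTheorem2:
  fixes a b H p :: real and g f :: "real \<Rightarrow> real"
  assumes "a < b"
    and "mono_on {a..b} g"
    and "\<forall>x\<in>{a..b}. 0 \<le> g x"
    and "\<forall>t\<in>{a<..b}. (g \<longlongrightarrow> g t) (at_left t)"
    and "bounded_variation a b f"
    and "integrable (LS_measure a b g) f"
    and "H > 0" and "0 < p" and "p \<le> 1"
    and "\<forall>x\<in>{a..b}. \<forall>y\<in>{a..b}.
           \<bar>cont_part a g x - cont_part a g y\<bar> \<le> H * \<bar>x - y\<bar> powr p"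
  shows "(\<bar>f a * (cont_part a g b - cont_part a g a)
            + infsum (\<lambda>s. f s * jump_plus g s) {a..<b}
            - integral\<^sup>L (LS_measure a b g) f\<bar>
           \<le> H * (b - a) powr p * total_variation a b f)
       \<and> (\<bar>(f a + f b) / 2 * (cont_part a g b - cont_part a g a)
            + infsum (\<lambda>s. f s * jump_plus g s) {a..<b}
            - integral\<^sup>L (LS_measure a b g) f\<bar>
           \<le> H * ((b - a) / 2) powr p * total_variation a b f)"
proof -
  note ab = \<open>a < b\<close>
  have ab': "a \<le> b" using ab by simp
  have L: "LSP a b g (LS_measure a b g)"
    using LS_measure_LSP[OF ab' assms(2) assms(4)] .
  define V where "V = total_variation a b f"
  define C where "C = cont_part a g b - cont_part a g a"
  have var: "\<bar>f t - f a\<bar> + \<bar>f b - f t\<bar> \<le> V" if "a \<le> t" "t \<le> b" for t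
    unfolding V_def using var_bound[OF assms(5) that] .
  have V0: "0 \<le> V" using var[of a] ab by simp
  have fb: "\<bar>f t\<bar> \<le> \<bar>f a\<bar> + V" if "t \<in> {a..<b}" for t
    using var[of t] that by auto
  have CH: "C \<le> H * (b - a) powr p"
  proof -
    have "\<bar>C\<bar> \<le> H * \<bar>b - a\<bar> powr p" unfolding C_def
      using assms(10) ab' by (meson atLeastAtMost_iff order_refl)
    then show ?thesis using ab by simp
  qed
  have c1: "\<bar>f a * C + infsum (\<lambda>s. f s * jump_plus g s) {a..<b}
            - integral\<^sup>L (LS_measure a b g) f\<bar> \<le> V * C"
    unfolding C_def
  proof (rule core[OF L ab' assms(2) assms(6)])
    show "\<bar>f t\<bar> \<le> \<bar>f a\<bar> + V" if "t \<in> {a..<b}" for t using fb that .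
    show "\<bar>f t - f a\<bar> \<le> V" if "t \<in> {a..<b}" for t using var[of t] that by auto
  qed
  have c2: "\<bar>(f a + f b) / 2 * C + infsum (\<lambda>s. f s * jump_plus g s) {a..<b}
            - integral\<^sup>L (LS_measure a b g) f\<bar> \<le> V / 2 * C"
    unfolding C_def
  proof (rule core[OF L ab' assms(2) assms(6)])
    show "\<bar>f t\<bar> \<le> \<bar>f a\<bar> + V" if "t \<in> {a..<b}" for t using fb that .
    show "\<bar>f t - (f a + f b) / 2\<bar> \<le> V / 2" if "t \<in> {a..<b}" for t
    proof -
      have e: "f t - (f a + f b) / 2 = ((f t - f a) - (f b - f t)) / 2" by (simp add: field_simps)
      have tr: "\<bar>(f t - f a) - (f b - f t)\<bar> \<le> \<bar>f t - f a\<bar> + \<bar>f b - f t\<bar>"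
        by (rule abs_triangle_ineq4)
      have "\<bar>f t - (f a + f b) / 2\<bar> = \<bar>(f t - f a) - (f b - f t)\<bar> / 2"
        unfolding e by simp
      then show ?thesis using tr var[of t] that by auto
    qed
  qed
  have p1: "V * C \<le> H * (b - a) powr p * V"
    using mult_left_mono[OF CH V0] by (simp add: algebra_simps)
  have pw: "(b - a) powr p / 2 \<le> ((b - a) / 2) powr p"
  proof -
    have "2 powr p \<le> 2 powr 1" using assms(9) by (intro powr_mono) auto
    then have two: "2 powr p \<le> 2" by simp
    have pos: "0 < 2 powr p" by simp
    have "(b - a) powr p / 2 \<le> (b - a) powr p / 2 powr p"
      using two pos by (intro divide_left_mono) auto
    also have "\<dots> = ((b - a) / 2) powr p" using ab by (simp add: powr_divide)
    finally show ?thesis .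
  qed
  have p2: "V / 2 * C \<le> H * ((b - a) / 2) powr p * V"
  proof -
    have "V / 2 * C \<le> V / 2 * (H * (b - a) powr p)"
      using mult_left_mono[OF CH] V0 by simp
    also have "\<dots> = H * V * ((b - a) powr p / 2)" by simp
    also have "\<dots> \<le> H * V * (((b - a) / 2) powr p)"
      using pw V0 assms(7) by (intro mult_left_mono) auto
    finally show ?thesis by (simp add: algebra_simps)
  qed
  show ?thesis
    using c1 p1 c2 p2 unfolding C_def V_def by linarith
qed

end
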